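(* Let $1\le n\le N$, $k\ge0$, $E\in\mathbb R$, $\mathbf u\in\mathbb Z^{nd}$ and $\kappa(n)=n^n$. If $M(\mathbf C^{(n)}_{L_{k+1}}(\mathbf u),E)\ge\kappa(n)+2$, then $M^{\mathrm{sep}}(\mathbf C^{(n)}_{L_{k+1}}(\mathbf u),E)\ge2$. Similarly, if $M_{\mathrm{PI}}(\mathbf C^{(n)}_{L_{k+1}}(\mathbf u),E)\ge\kappa(n)+2$, then $M^{\mathrm{sep}}_{\mathrm{PI}}(\mathbf C^{(n)}_{L_{k+1}}(\mathbf u),E)\ge2$.
   Context: Max-norm cubes $\mathbf C^{(n)}_L(\mathbf u)=\{\mathbf x\in\mathbb R^{nd}:|\mathbf x-\mathbf u|<L\}$, $\mathbf u\in\mathbb Z^{nd}$. Scales $L_0>3$, $L_k=\lfloor L_{k-1}^{3/2}\rfloor+1$. Given $m>0$, "$(E,m)$-singular" refers to a fixed property of cubes (failure of the resolvent decay bound $\|\mathbf 1_{\mathbf C^{(n,out)}_L}\mathbf G^{(n)}_{\mathbf C^{(n)}_L}(E)\mathbf 1_{\mathbf C^{(n,int)}_L}\|\le e^{-\gamma(m,L,n)L}$ or $E\in\sigma$); only the counting structure matters here. Separability: $\mathbf C^{(n)}_L(\mathbf x)$ is $\mathcal J$-separable from $\mathbf C^{(n)}_L(\mathbf y)$ if $\emptyset\ne\mathcal J\subset\{1,..,n\}$ and $\bigcup_{j\in\mathcal J}C^{(1)}_L(x_j)$ is disjoint from $\bigcup_{j\notin\mathcal J}C^{(1)}_L(x_j)\cup\bigcup_jC^{(1)}_L(y_j)$;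 a pair is separable if $|\mathbf x-\mathbf y|>7NL$ and one is $\mathcal J$-separable from the other. A cube is partially interactive (PI) if $\max_{i\ne j}|u_i-u_j|>n(2L+r_0)$. Counts: $M(\mathbf C^{(n)}_{L_{k+1}}(\mathbf u),E)$ is the maximal number of $(E,m)$-singular cubes $\mathbf C^{(n)}_{L_k}(\mathbf u^{(j)})\subset\mathbf C^{(n)}_{L_{k+1}}(\mathbf u)$ with $\mathbf u^{(j)}\in\mathbb Z^{nd}$, $\operatorname{dist}(\mathbf u^{(j)},\partial\mathbf C^{(n)}_{L_{k+1}}(\mathbf u))\ge2L_k$ and $|\mathbf u^{(j)}-\mathbf u^{(j')}|>7NL_k$ for $j\ne j'$; $M^{\mathrm{sep}}$ is the maximal number of pairwise separable $(E,m)$-singular cubes $\mathbf C^{(n)}_{L_k}(\mathbf u^{(j)})\subset\mathbf C^{(n)}_{L_{k+1}}(\mathbf u)$; $M_{\mathrm{PI}}$ is the maximal number of $(E,m)$-singular PI cubes $\mathbf C^{(n)}_{L_k}(\mathbf u^{(j)})\subset\mathbf C^{(n)}_{L_{k+1}}(\mathbf u)$ with $|\mathbf u^{(j)}-\mathbf u^{(j')}|>7NL_k$ for $j\ne j'$; $M^{\mathrm{sep}}_{\mathrm{PI}}$ is the maximal number of pairwise separable $(E,m)$-singular PI cubes $\mathbf C^{(n)}_{L_k}(\mathbf u^{(j)})\subset\mathbf C^{(n)}_{L_{k+1}}(\mathbf u)$. *)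

theory Defs
  imports Complex_Main "HOL-Library.Extended_Nat"
begin

text \<open>n-particle configurations in Z^{nd} (resp. R^{nd}): particle index i < n,
  coordinate index a < d; entries outside this range are irrelevant (lattice
  points are normalised to be 0 there).\<close>
type_synonym cfg = "nat \<Rightarrow> nat \<Rightarrow> int"
type_synonym rcfg = "nat \<Rightarrow> nat \<Rightarrow> real"

definition rof :: "cfg \<Rightarrow> rcfg" where
  "rof x = (\<lambda>i a. real_of_int (x i a))"

definition mnorm :: "nat \<Rightarrow> nat \<Rightarrow> rcfg \<Rightarrow> real" where
  "mnorm n d z = Max {\<bar>z i a\<bar> | i a. i < n \<and> a < d}"

definition norm1 :: "nat \<Rightarrow> (nat \<Rightarrow> real) \<Rightarrow> real" where
  "norm1 d w = Max {\<bar>w a\<bar> | a. a < d}"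

definition latt :: "nat \<Rightarrow> nat \<Rightarrow> cfg set" where
  "latt n d = {x. \<forall>i a. \<not> (i < n \<and> a < d) \<longrightarrow> x i a = 0}"

definition cubeN :: "nat \<Rightarrow> nat \<Rightarrow> real \<Rightarrow> cfg \<Rightarrow> rcfg set" where
  "cubeN n d L x = {z. (\<forall>i a. \<not> (i < n \<and> a < d) \<longrightarrow> z i a = 0) \<and>
                       mnorm n d (\<lambda>i a. z i a - rof x i a) < L}"

definition bdN :: "nat \<Rightarrow> nat \<Rightarrow> real \<Rightarrow> cfg \<Rightarrow> rcfg set" where
  "bdN n d L x = {z. (\<forall>i a. \<not> (i < n \<and> a < d) \<longrightarrow> z i a = 0) \<and>
                       mnorm n d (\<lambda>i a. z i a - rof x i a) = L}"

definition cube1 :: "nat \<Rightarrow> real \<Rightarrow> (nat \<Rightarrow> int) \<Rightarrow> (nat \<Rightarrow> real) set" where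
  "cube1 d L y = {z. (\<forall>a. \<not> a < d \<longrightarrow> z a = 0) \<and>
                     norm1 d (\<lambda>a. z a - real_of_int (y a)) < L}"

definition distN :: "nat \<Rightarrow> nat \<Rightarrow> rcfg \<Rightarrow> rcfg set \<Rightarrow> real" where
  "distN n d v A = Inf {mnorm n d (\<lambda>i a. v i a - z i a) | z. z \<in> A}"

definition distZ :: "nat \<Rightarrow> nat \<Rightarrow> cfg \<Rightarrow> cfg \<Rightarrow> real" where
  "distZ n d x y = mnorm n d (\<lambda>i a. rof x i a - rof y i a)"

fun Lscale :: "real \<Rightarrow> nat \<Rightarrow> real" where
  "Lscale L0 0 = L0"
| "Lscale L0 (Suc k) = real_of_int \<lfloor>Lscale L0 k powr (3/2)\<rfloor> + 1"

definition kappa :: "nat \<Rightarrow> nat" where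
  "kappa n = n ^ n"

text \<open>J-separability (particle indices 0..n-1 instead of 1..n)\<close>
definition Jsep :: "nat \<Rightarrow> nat \<Rightarrow> real \<Rightarrow> nat set \<Rightarrow> cfg \<Rightarrow> cfg \<Rightarrow> bool" where
  "Jsep n d L J x y \<longleftrightarrow> J \<noteq> {} \<and> J \<subseteq> {..<n} \<and>
     (\<Union>j\<in>J. cube1 d L (x j)) \<inter>
       ((\<Union>j\<in>{..<n} - J. cube1 d L (x j)) \<union> (\<Union>j\<in>{..<n}. cube1 d L (y j))) = {}"

definition sep_pair :: "nat \<Rightarrow> nat \<Rightarrow> nat \<Rightarrow> real \<Rightarrow> cfg \<Rightarrow> cfg \<Rightarrow> bool" where
  "sep_pair N n d L x y \<longleftrightarrow> distZ n d x y > 7 * real N * L \<and>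
     ((\<exists>J. Jsep n d L J x y) \<or> (\<exists>J. Jsep n d L J y x))"

text \<open>partially interactive cubes, r0 = interaction range\<close>
definition PI :: "nat \<Rightarrow> nat \<Rightarrow> real \<Rightarrow> real \<Rightarrow> cfg \<Rightarrow> bool" where
  "PI n d r0 L x \<longleftrightarrow> (\<exists>i<n. \<exists>j<n. i \<noteq> j \<and>
      norm1 d (\<lambda>a. real_of_int (x i a - x j a)) > real n * (2 * L + r0))"

text \<open>admissible families of centres; S is the (E,m)-singularity predicate for
  cubes C^{(n)}_{L_k}(v) (abstract, only the counting structure matters)\<close>
definition M_fam :: "(cfg \<Rightarrow> bool) \<Rightarrow> nat \<Rightarrow> nat \<Rightarrow> nat \<Rightarrow> real \<Rightarrow> real \<Rightarrow> cfg \<Rightarrow> cfg set \<Rightarrow> bool" where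
  "M_fam S N n d Lk Lk1 u U \<longleftrightarrow> U \<subseteq> latt n d \<and>
     (\<forall>v\<in>U. S v \<and> cubeN n d Lk v \<subseteq> cubeN n d Lk1 u \<and>
              distN n d (rof v) (bdN n d Lk1 u) \<ge> 2 * Lk) \<and>
     (\<forall>v\<in>U. \<forall>w\<in>U. v \<noteq> w \<longrightarrow> distZ n d v w > 7 * real N * Lk)"

definition Msep_fam :: "(cfg \<Rightarrow> bool) \<Rightarrow> nat \<Rightarrow> nat \<Rightarrow> nat \<Rightarrow> real \<Rightarrow> real \<Rightarrow> cfg \<Rightarrow> cfg set \<Rightarrow> bool" where
  "Msep_fam S N n d Lk Lk1 u U \<longleftrightarrow> U \<subseteq> latt n d \<and>
     (\<forall>v\<in>U. S v \<and> cubeN n d Lk v \<subseteq> cubeN n d Lk1 u) \<and>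
     (\<forall>v\<in>U. \<forall>w\<in>U. v \<noteq> w \<longrightarrow> sep_pair N n d Lk v w)"

definition MPI_fam :: "(cfg \<Rightarrow> bool) \<Rightarrow> real \<Rightarrow> nat \<Rightarrow> nat \<Rightarrow> nat \<Rightarrow> real \<Rightarrow> real \<Rightarrow> cfg \<Rightarrow> cfg set \<Rightarrow> bool" where
  "MPI_fam S r0 N n d Lk Lk1 u U \<longleftrightarrow> U \<subseteq> latt n d \<and>
     (\<forall>v\<in>U. S v \<and> PI n d r0 Lk v \<and> cubeN n d Lk v \<subseteq> cubeN n d Lk1 u) \<and>
     (\<forall>v\<in>U. \<forall>w\<in>U. v \<noteq> w \<longrightarrow> distZ n d v w > 7 * real N * Lk)"

definition MsepPI_fam :: "(cfg \<Rightarrow> bool) \<Rightarrow> real \<Rightarrow> nat \<Rightarrow> nat \<Rightarrow> nat \<Rightarrow> real \<Rightarrow> real \<Rightarrow> cfg \<Rightarrow> cfg set \<Rightarrow> bool" where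
  "MsepPI_fam S r0 N n d Lk Lk1 u U \<longleftrightarrow> U \<subseteq> latt n d \<and>
     (\<forall>v\<in>U. S v \<and> PI n d r0 Lk v \<and> cubeN n d Lk v \<subseteq> cubeN n d Lk1 u) \<and>
     (\<forall>v\<in>U. \<forall>w\<in>U. v \<noteq> w \<longrightarrow> sep_pair N n d Lk v w)"

definition maxcount :: "('a set \<Rightarrow> bool) \<Rightarrow> enat" where
  "maxcount F = (SUP U\<in>{U. finite U \<and> F U}. enat (card U))"

end

theory Submission
  imports Defs "HOL-Library.FuncSet"
begin

definition N1 :: "nat \<Rightarrow> (nat \<Rightarrow> int) \<Rightarrow> (nat \<Rightarrow> int) \<Rightarrow> real" where
  "N1 d p q = norm1 d (\<lambda>a. real_of_int (p a) - real_of_int (q a))"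

lemma norm1_alt: "norm1 d w = Max ((\<lambda>a. \<bar>w a\<bar>) ` {..<d})"
  unfolding norm1_def by (rule arg_cong[of _ _ Max]) auto

lemma norm1_ge: "a < d \<Longrightarrow> \<bar>w a\<bar> \<le> norm1 d w"
  unfolding norm1_alt by (rule Max_ge) auto

lemma norm1_lessI: "1 \<le> d \<Longrightarrow> (\<And>a. a < d \<Longrightarrow> \<bar>w a\<bar> < c) \<Longrightarrow> norm1 d w < c"
  unfolding norm1_alt by (subst Max_less_iff) (auto simp: lessThan_empty_iff)

lemma norm1_leI: "1 \<le> d \<Longrightarrow> (\<And>a. a < d \<Longrightarrow> \<bar>w a\<bar> \<le> c) \<Longrightarrow> norm1 d w \<le> c"
  unfolding norm1_alt by (subst Max_le_iff) (auto simp: lessThan_empty_iff)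

lemma mnorm_alt: "mnorm n d z = Max ((\<lambda>(i,a). \<bar>z i a\<bar>) ` ({..<n} \<times> {..<d}))"
  unfolding mnorm_def by (rule arg_cong[of _ _ Max]) auto

lemma mnorm_lessI: "1 \<le> n \<Longrightarrow> 1 \<le> d \<Longrightarrow> (\<And>i a. i < n \<Longrightarrow> a < d \<Longrightarrow> \<bar>z i a\<bar> < c)
   \<Longrightarrow> mnorm n d z < c"
  unfolding mnorm_alt by (subst Max_less_iff) (auto simp: lessThan_empty_iff)

lemma distZ_sym: "distZ n d x y = distZ n d y x"
  unfolding distZ_def mnorm_def by (rule arg_cong[of _ _ Max]) (auto simp: abs_minus_commute)

lemma sep_pair_sym: "sep_pair N n d L x y = sep_pair N n d L y x"
  unfolding sep_pair_def using distZ_sym by metis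

lemma N1_tri: "1 \<le> d \<Longrightarrow> N1 d p r \<le> N1 d p q + N1 d q r"
  unfolding N1_def
proof (rule norm1_leI)
  fix a assume "a < d"
  have "\<bar>real_of_int (p a) - real_of_int (q a)\<bar> \<le> norm1 d (\<lambda>a. real_of_int (p a) - real_of_int (q a))"
    using \<open>a < d\<close> by (rule norm1_ge)
  moreover have "\<bar>real_of_int (q a) - real_of_int (r a)\<bar> \<le> norm1 d (\<lambda>a. real_of_int (q a) - real_of_int (r a))"
    using \<open>a < d\<close> by (rule norm1_ge)
  ultimately show "\<bar>real_of_int (p a) - real_of_int (r a)\<bar> \<le> norm1 d (\<lambda>a. real_of_int (p a) - real_of_int (q a)) +
          norm1 d (\<lambda>a. real_of_int (q a) - real_of_int (r a))" by linarith
qed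

lemma N1_coord: "a < d \<Longrightarrow> \<bar>real_of_int (p a) - real_of_int (q a)\<bar> \<le> N1 d p q"
  unfolding N1_def by (rule norm1_ge)

lemma N1_sym: "N1 d p q = N1 d q p"
  unfolding N1_def norm1_def by (rule arg_cong[of _ _ Max]) (auto simp: abs_minus_commute)

lemma cube1_disj:
  assumes "1 \<le> d" "N1 d p q \<ge> 2 * L"
  shows "cube1 d L p \<inter> cube1 d L q = {}"
proof (rule ccontr)
  assume "cube1 d L p \<inter> cube1 d L q \<noteq> {}"
  then obtain z where zp: "norm1 d (\<lambda>a. z a - real_of_int (p a)) < L"
    and zq: "norm1 d (\<lambda>a. z a - real_of_int (q a)) < L"
    unfolding cube1_def by auto
  have "N1 d p q < 2 * L"
    unfolding N1_def
  proof (rule norm1_lessI[OF assms(1)])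
    fix a assume a: "a < d"
    have "\<bar>z a - real_of_int (p a)\<bar> < L" using norm1_ge[OF a, of "\<lambda>a. z a - real_of_int (p a)"] zp by simp
    moreover have "\<bar>z a - real_of_int (q a)\<bar> < L" using norm1_ge[OF a, of "\<lambda>a. z a - real_of_int (q a)"] zq by simp
    ultimately show "\<bar>real_of_int (p a) - real_of_int (q a)\<bar> < 2 * L" by linarith
  qed
  with assms(2) show False by simp
qed

lemma nonsep_close:
  assumes L: "L > 0" and n: "1 \<le> n" and d: "1 \<le> d"
    and ns: "\<not> (\<exists>J. Jsep n d L J y x)" and j0: "j0 < n"
  shows "\<exists>i<n. N1 d (y j0) (x i) < 2 * real n * L"
proof (rule ccontr)
  assume not: "\<not> (\<exists>i<n. N1 d (y j0) (x i) < 2 * real n * L)"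
  define D where "D j = Min ((\<lambda>i. N1 d (y j) (x i)) ` {..<n})" for j
  have Dle: "D j \<le> N1 d (y j) (x i)" if "i < n" for j i
    unfolding D_def using that by (intro Min_le) auto
  have Din: "\<exists>i<n. D j = N1 d (y j) (x i)" for j
  proof -
    have "D j \<in> (\<lambda>i. N1 d (y j) (x i)) ` {..<n}"
      unfolding D_def using n by (intro Min_in) (auto simp: lessThan_empty_iff)
    then show ?thesis by auto
  qed
  have D0: "D j \<ge> 0" for j
  proof -
    obtain i where "i < n" "D j = N1 d (y j) (x i)" using Din by blast
    moreover have "N1 d (y j) (x i) \<ge> 0"
      using N1_coord[of 0 d "y j" "x i"] d by linarith
    ultimately show ?thesis by simp
  qed
  have Dj0: "D j0 \<ge> 2 * real n * L"
    using Din[of j0] not by force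
  define f where "f j = \<lfloor>D j / (2 * L)\<rfloor>" for j
  have "card (f ` ({..<n} - {j0})) \<le> card ({..<n} - {j0})" by (rule card_image_le) auto
  also have "\<dots> = n - 1" using j0 by simp
  also have "\<dots> < card {0..<int n}" using n by simp
  finally have "\<not> {0..<int n} \<subseteq> f ` ({..<n} - {j0})"
    using card_mono[of "f ` ({..<n} - {j0})" "{0..<int n}"] by auto
  then obtain m where "m \<in> {0..<int n}" "m \<notin> f ` ({..<n} - {j0})" by blast
  then have m: "0 \<le> m" "m < int n" "m \<notin> f ` ({..<n} - {j0})" by auto
  have fj0: "f j0 \<ge> int n"
  proof -
    have "D j0 / (2 * L) \<ge> real n" using Dj0 L by (simp add: field_simps)
    then show ?thesis unfolding f_def by (simp add: le_floor_iff)
  qed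
  have fne: "f j \<noteq> m" if "j < n" for j
    using m fj0 that by (cases "j = j0") auto
  define J where "J = {j. j < n \<and> D j \<ge> 2 * (real_of_int m + 1) * L}"
  have j0J: "j0 \<in> J"
  proof -
    have "2 * (real_of_int m + 1) * L \<le> 2 * real n * L"
      using m L by (intro mult_right_mono) auto
    then show ?thesis unfolding J_def using j0 Dj0 by auto
  qed
  have out: "D j < 2 * real_of_int m * L" if "j < n" "j \<notin> J" for j
  proof -
    have lt: "D j < 2 * (real_of_int m + 1) * L" using that unfolding J_def by auto
    have "D j / (2 * L) < real_of_int m + 1" using lt L by (simp add: field_simps)
    then have "f j < m + 1" unfolding f_def using floor_less_iff[of "D j / (2*L)" "m+1"] by simp
    with fne[OF that(1)] have "f j < m" by simp
    then have "D j / (2 * L) < real_of_int m" unfolding f_def by (simp add: floor_less_iff)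
    then show ?thesis using L by (simp add: field_simps)
  qed
  have far1: "N1 d (y j) (y j') \<ge> 2 * L" if "j \<in> J" "j' < n" "j' \<notin> J" for j j'
  proof -
    obtain i' where i': "i' < n" "D j' = N1 d (y j') (x i')" using Din by blast
    have "D j \<le> N1 d (y j) (x i')" using Dle i' by blast
    also have "\<dots> \<le> N1 d (y j) (y j') + N1 d (y j') (x i')" by (rule N1_tri[OF d])
    finally have "D j \<le> N1 d (y j) (y j') + D j'" using i' by simp
    moreover have "D j \<ge> 2 * (real_of_int m + 1) * L" using that J_def by auto
    moreover have "D j' < 2 * real_of_int m * L" using out that by blast
    ultimately show ?thesis by (simp add: algebra_simps)
  qed
  have far2: "N1 d (y j) (x i) \<ge> 2 * L" if "j \<in> J" "i < n" for j i
  proof -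
    have "D j \<ge> 2 * (real_of_int m + 1) * L" using that J_def by auto
    moreover have "2 * (real_of_int m + 1) * L \<ge> 2 * L" using m L by simp
    ultimately show ?thesis using Dle[OF that(2), of j] by linarith
  qed
  have "Jsep n d L J y x"
    unfolding Jsep_def
  proof (intro conjI)
    show "J \<noteq> {}" using j0J by auto
    show "J \<subseteq> {..<n}" unfolding J_def by auto
    show "(\<Union>j\<in>J. cube1 d L (y j)) \<inter>
      ((\<Union>j\<in>{..<n} - J. cube1 d L (y j)) \<union> (\<Union>j\<in>{..<n}. cube1 d L (x j))) = {}"
    proof -
      have a: "cube1 d L (y j) \<inter> cube1 d L (y j') = {}" if "j \<in> J" "j' \<in> {..<n} - J" for j j'
        using cube1_disj[OF d far1] that by auto
      have b: "cube1 d L (y j) \<inter> cube1 d L (x i) = {}" if "j \<in> J" "i \<in> {..<n}" for j i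
        using cube1_disj[OF d far2] that by auto
      show ?thesis using a b by blast
    qed
  qed
  with ns show False by blast
qed

lemma core:
  assumes L: "L > 0" and n: "1 \<le> n" "n \<le> N" and d: "1 \<le> d" and fin: "finite U"
    and cU: "card U \<ge> n ^ n + 2"
    and dist: "\<forall>v\<in>U. \<forall>w\<in>U. v \<noteq> w \<longrightarrow> distZ n d v w > 7 * real N * L"
  shows "\<exists>v\<in>U. \<exists>w\<in>U. v \<noteq> w \<and> sep_pair N n d L v w"
proof (rule ccontr)
  assume H: "\<not> ?thesis"
  from cU have "U \<noteq> {}" by auto
  then obtain v where v: "v \<in> U" by auto
  define W where "W = U - {v}"
  have cW: "card W > n ^ n" using cU v fin unfolding W_def by simp
  have close: "\<exists>i<n. N1 d (w j) (v i) < 2 * real n * L" if "w \<in> W" "j < n" for w j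
  proof -
    have "w \<in> U" "w \<noteq> v" using that W_def by auto
    then have "distZ n d v w > 7 * real N * L" using dist v by auto
    moreover have "\<not> sep_pair N n d L v w" using H v \<open>w \<in> U\<close> \<open>w \<noteq> v\<close> by auto
    ultimately have "\<not> (\<exists>J. Jsep n d L J w v)" unfolding sep_pair_def by auto
    then show ?thesis using nonsep_close[OF L n(1) d _ that(2)] by blast
  qed
  define g where "g w = (\<lambda>j\<in>{..<n}. SOME i. i < n \<and> N1 d (w j) (v i) < 2 * real n * L)" for w
  have gprop: "g w j < n \<and> N1 d (w j) (v (g w j)) < 2 * real n * L" if "w \<in> W" "j < n" for w j
  proof -
    have "g w j = (SOME i. i < n \<and> N1 d (w j) (v i) < 2 * real n * L)"
      using that(2) by (simp add: g_def)
    then show ?thesis using someI_ex[OF close[OF that]] by simp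
  qed
  have gimg: "g ` W \<subseteq> PiE {..<n} (\<lambda>_. {..<n})"
  proof
    fix h assume "h \<in> g ` W"
    then obtain w where w: "w \<in> W" "h = g w" by blast
    show "h \<in> PiE {..<n} (\<lambda>_. {..<n})"
    proof (rule PiE_I)
      fix j assume "j \<in> {..<n}" then show "h j \<in> {..<n}" using gprop[OF w(1)] w(2) by auto
    next
      fix j assume "j \<notin> {..<n}" then show "h j = undefined" using w(2) by (simp add: g_def)
    qed
  qed
  have "\<not> inj_on g W"
  proof
    assume "inj_on g W"
    then have "card W \<le> card (PiE {..<n} (\<lambda>_. {..<n}))"
      using gimg by (intro card_inj_on_le) (auto intro: finite_PiE)
    also have "\<dots> = n ^ n" by (simp add: card_PiE)
    finally show False using cW by simp
  qed
  then obtain w1 w2 where w: "w1 \<in> W" "w2 \<in> W" "w1 \<noteq> w2" "g w1 = g w2"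
    unfolding inj_on_def by auto
  have "distZ n d w1 w2 < 4 * real n * L"
    unfolding distZ_def
  proof (rule mnorm_lessI[OF n(1) d])
    fix j a assume j: "j < n" and a: "a < d"
    have 1: "N1 d (w1 j) (v (g w1 j)) < 2 * real n * L" using gprop w j by blast
    have 2: "N1 d (w2 j) (v (g w1 j)) < 2 * real n * L" using gprop[OF w(2) j] w(4) by simp
    have "\<bar>real_of_int (w1 j a) - real_of_int (v (g w1 j) a)\<bar> \<le> N1 d (w1 j) (v (g w1 j))"
      by (rule N1_coord[OF a])
    moreover have "\<bar>real_of_int (w2 j a) - real_of_int (v (g w1 j) a)\<bar> \<le> N1 d (w2 j) (v (g w1 j))"
      by (rule N1_coord[OF a])
    ultimately show "\<bar>rof w1 j a - rof w2 j a\<bar> < 4 * real n * L"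
      using 1 2 unfolding rof_def by linarith
  qed
  moreover have "4 * real n * L \<le> 7 * real N * L" using n L by (intro mult_right_mono) auto
  moreover have "distZ n d w1 w2 > 7 * real N * L" using dist w W_def by auto
  ultimately show False by linarith
qed

lemma maxcount_get:
  assumes "maxcount F \<ge> enat m" "1 \<le> m"
  shows "\<exists>U. finite U \<and> F U \<and> card U \<ge> m"
proof (rule ccontr)
  assume "\<not> ?thesis"
  then have "\<forall>U\<in>{U. finite U \<and> F U}. enat (card U) \<le> enat (m - 1)" by auto
  then have "maxcount F \<le> enat (m - 1)" unfolding maxcount_def by (intro SUP_least) auto
  then have "enat m \<le> enat (m - 1)" using assms(1) by (rule order.trans[rotated])
  with assms(2) show False by simp
qed

lemma maxcount_put: "finite U \<Longrightarrow> F U \<Longrightarrow> enat (card U) \<le> maxcount F"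
  unfolding maxcount_def by (rule SUP_upper) auto

lemma Lscale_pos: "L0 > 3 \<Longrightarrow> Lscale L0 k > 3"
proof (induction k)
  case 0 then show ?case by simp
next
  case (Suc k)
  have "Lscale L0 k powr (3/2) \<ge> Lscale L0 k powr 1"
    using Suc by (intro powr_mono) auto
  then have "Lscale L0 k powr (3/2) > 3" using Suc by simp
  then show ?case by simp
qed

theorem mainTheorem13:
  fixes sing :: "nat \<Rightarrow> real \<Rightarrow> real \<Rightarrow> cfg \<Rightarrow> bool"
    and N n d k :: nat and E L0 r0 :: real and u :: cfg
  assumes "1 \<le> n" and "n \<le> N" and "1 \<le> d" and "L0 > 3" and "u \<in> latt n d"
  defines "Lk \<equiv> Lscale L0 k" and "Lk1 \<equiv> Lscale L0 (Suc k)"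
  shows "(maxcount (M_fam (sing n E Lk) N n d Lk Lk1 u) \<ge> enat (kappa n + 2)
            \<longrightarrow> maxcount (Msep_fam (sing n E Lk) N n d Lk Lk1 u) \<ge> 2)
       \<and> (maxcount (MPI_fam (sing n E Lk) r0 N n d Lk Lk1 u) \<ge> enat (kappa n + 2)
            \<longrightarrow> maxcount (MsepPI_fam (sing n E Lk) r0 N n d Lk Lk1 u) \<ge> 2)"
proof (intro conjI impI)
  have L: "Lk > 0" unfolding Lk_def using Lscale_pos[OF assms(4), of k] by linarith
  have two: "enat (card {v, w}) = 2" if "v \<noteq> w" for v w :: cfg
    using that by (simp add: numeral_eq_enat)
  {
    assume A: "maxcount (M_fam (sing n E Lk) N n d Lk Lk1 u) \<ge> enat (kappa n + 2)"
    obtain U where U: "finite U" "M_fam (sing n E Lk) N n d Lk Lk1 u U" "card U \<ge> n ^ n + 2"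
      using maxcount_get[OF A[unfolded kappa_def]] by auto
    then obtain v w where vw: "v \<in> U" "w \<in> U" "v \<noteq> w" "sep_pair N n d Lk v w"
      using core[OF L assms(1,2,3) U(1,3)] unfolding M_fam_def by blast
    have F: "Msep_fam (sing n E Lk) N n d Lk Lk1 u {v, w}"
      using U(2) vw sep_pair_sym unfolding M_fam_def Msep_fam_def by auto
    have "enat (card {v, w}) \<le> maxcount (Msep_fam (sing n E Lk) N n d Lk Lk1 u)"
      by (rule maxcount_put) (auto intro: F)
    then show "maxcount (Msep_fam (sing n E Lk) N n d Lk Lk1 u) \<ge> 2" using two[OF vw(3)] by simp
  }
  {
    assume A: "maxcount (MPI_fam (sing n E Lk) r0 N n d Lk Lk1 u) \<ge> enat (kappa n + 2)"
    obtain U where U: "finite U" "MPI_fam (sing n E Lk) r0 N n d Lk Lk1 u U" "card U \<ge> n ^ n + 2"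
      using maxcount_get[OF A[unfolded kappa_def]] by auto
    then obtain v w where vw: "v \<in> U" "w \<in> U" "v \<noteq> w" "sep_pair N n d Lk v w"
      using core[OF L assms(1,2,3) U(1,3)] unfolding MPI_fam_def by blast
    have F: "MsepPI_fam (sing n E Lk) r0 N n d Lk Lk1 u {v, w}"
      using U(2) vw sep_pair_sym unfolding MPI_fam_def MsepPI_fam_def by auto
    have "enat (card {v, w}) \<le> maxcount (MsepPI_fam (sing n E Lk) r0 N n d Lk Lk1 u)"
      by (rule maxcount_put) (auto intro: F)
    then show "maxcount (MsepPI_fam (sing n E Lk) r0 N n d Lk Lk1 u) \<ge> 2" using two[OF vw(3)] by simp
  }
qed

end
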